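(* For any weight data $A=(a_1,\dots,a_n)$, the weight assignment $Z_A$ is a smooth extremal assignment.
   Context: $[n]=\{1,\dots,n\}$. A stable $n$-labeled tree is a finite tree with $n$ leaves labeled bijectively by $[n]$, all internal vertices of degree $\ge 3$; $V(G)$ its internal vertices; $S(n)$ the set of such trees up to label-preserving isomorphism and $S_2(n)$ those with exactly 2 internal vertices. $G\rightsquigarrow G'$: $G'$ obtained by collapsing connected sets of internal vertices, inducing surjection $\pi:V(G)\to V(G')$; $v\rightsquigarrow v'$ means $\pi(v)=v'$. An extremal assignment of order $n$: rule $Z(G)\subset V(G)$ for $G\in S(n)$ with (a) $Z(G)\ne V(G)$, (b) if $G\rightsquigarrow G'$ and $\pi^{-1}(v')=\{v_1,\dots,v_k\}$ then $v'\in Z(G')\iff v_1,\dots,v_k\in Z(G)$. $Z$ is smooth if for every $G$ and $v\in Z(G)$ there exist $G'\in S_2(n)$, $v'\in Z(G')$ with $G\rightsquigarrow G'$, $v\rightsquigarrow v'$. Weight data: $A=(a_1,\dots,a_n)$ with $a_i\in\mathbb{Q}$, $0<a_i\le 1$, $\sum a_i>2$. A tail of $G$ is a nonempty connected set $T\subset V(G)$ joined to $V(G)\setminus T$ by exactly one edge; $\ell(T)$ is the set of labels of leaves adjacent to vertices of $T$. The weight assignment is $Z_A(G)=\{v\in V(G):\exists$ a tail $T$ of $G$ with $v\in T$ and $\sum_{i\in\ell(T)}a_i\le 1\}$; it is known to be an extremal assignment. *)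

theory Defs
  imports Complex_Main
begin

text \<open>A stable n-labeled tree, represented (for n \<ge> 3, where every leaf is adjacent
to exactly one internal vertex) by its set of internal vertices, the edges between
internal vertices (as two-element sets) and the map sending a label i to the
internal vertex adjacent to leaf i.\<close>

record stree =
  verts :: "nat set"
  edges :: "nat set set"
  leaf  :: "nat \<Rightarrow> nat"

definition adj_in :: "nat set set \<Rightarrow> nat set \<Rightarrow> (nat \<times> nat) set" where
  "adj_in E T = {(u, v). u \<in> T \<and> v \<in> T \<and> {u, v} \<in> E}"

definition connected_in :: "nat set set \<Rightarrow> nat set \<Rightarrow> bool" where
  "connected_in E T \<longleftrightarrow> T \<noteq> {} \<and> (\<forall>u\<in>T. \<forall>v\<in>T. (u, v) \<in> (adj_in E T)\<^sup>*)"

definition stable_tree :: "nat \<Rightarrow> stree \<Rightarrow> bool" where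
  "stable_tree n G \<longleftrightarrow>
     finite (verts G) \<and>
     edges G \<subseteq> {{u, v} | u v. u \<in> verts G \<and> v \<in> verts G \<and> u \<noteq> v} \<and>
     (\<forall>i\<in>{1..n}. leaf G i \<in> verts G) \<and>
     connected_in (edges G) (verts G) \<and>
     card (edges G) + 1 = card (verts G) \<and>
     (\<forall>v\<in>verts G. card {e\<in>edges G. v \<in> e} + card {i\<in>{1..n}. leaf G i = v} \<ge> 3)"

definition contracts :: "nat \<Rightarrow> stree \<Rightarrow> stree \<Rightarrow> (nat \<Rightarrow> nat) \<Rightarrow> bool" where
  "contracts n G G' \<pi> \<longleftrightarrow>
     stable_tree n G \<and> stable_tree n G' \<and>
     \<pi> ` verts G = verts G' \<and>
     (\<forall>v'\<in>verts G'. connected_in (edges G) {v\<in>verts G. \<pi> v = v'}) \<and>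
     (\<forall>i\<in>{1..n}. leaf G' i = \<pi> (leaf G i)) \<and>
     edges G' = {{\<pi> u, \<pi> v} | u v. {u, v} \<in> edges G \<and> \<pi> u \<noteq> \<pi> v}"

definition extremal_assignment :: "nat \<Rightarrow> (stree \<Rightarrow> nat set) \<Rightarrow> bool" where
  "extremal_assignment n Z \<longleftrightarrow>
     (\<forall>G. stable_tree n G \<longrightarrow> Z G \<subseteq> verts G \<and> Z G \<noteq> verts G) \<and>
     (\<forall>G G' \<pi>. contracts n G G' \<pi> \<longrightarrow>
        (\<forall>v'\<in>verts G'. v' \<in> Z G' \<longleftrightarrow> (\<forall>v\<in>verts G. \<pi> v = v' \<longrightarrow> v \<in> Z G)))"

definition smooth_assignment :: "nat \<Rightarrow> (stree \<Rightarrow> nat set) \<Rightarrow> bool" where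
  "smooth_assignment n Z \<longleftrightarrow>
     (\<forall>G v. stable_tree n G \<and> v \<in> Z G \<longrightarrow>
        (\<exists>G' \<pi>. card (verts G') = 2 \<and> contracts n G G' \<pi> \<and> \<pi> v \<in> Z G'))"

definition is_tail :: "stree \<Rightarrow> nat set \<Rightarrow> bool" where
  "is_tail G T \<longleftrightarrow> T \<subseteq> verts G \<and> connected_in (edges G) T \<and>
     card {e\<in>edges G. e \<inter> T \<noteq> {} \<and> e \<inter> (verts G - T) \<noteq> {}} = 1"

definition tail_labels :: "nat \<Rightarrow> stree \<Rightarrow> nat set \<Rightarrow> nat set" where
  "tail_labels n G T = {i\<in>{1..n}. leaf G i \<in> T}"

definition weight_data :: "nat \<Rightarrow> (nat \<Rightarrow> rat) \<Rightarrow> bool" where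
  "weight_data n a \<longleftrightarrow> (\<forall>i\<in>{1..n}. 0 < a i \<and> a i \<le> 1) \<and> (\<Sum>i\<in>{1..n}. a i) > 2"

definition weight_assignment :: "nat \<Rightarrow> (nat \<Rightarrow> rat) \<Rightarrow> stree \<Rightarrow> nat set" where
  "weight_assignment n a G =
     {v\<in>verts G. \<exists>T. is_tail G T \<and> v \<in> T \<and> (\<Sum>i\<in>tail_labels n G T. a i) \<le> 1}"

end

theory Submission
  imports Defs
begin


definition rel :: "nat set set \<Rightarrow> (nat \<times> nat) set" where
  "rel E = {(u, v). {u, v} \<in> E}"

definition reach :: "nat set set \<Rightarrow> nat \<Rightarrow> nat set" where
  "reach E u = {y. (u, y) \<in> (rel E)\<^sup>*}"

lemma rel_sym: "sym (rel E)"
  unfolding rel_def sym_def by (auto simp: insert_commute)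

lemma rtr_sym: "(u, v) \<in> (rel E)\<^sup>* \<Longrightarrow> (v, u) \<in> (rel E)\<^sup>*"
  using sym_rtrancl[OF rel_sym] by (auto dest: symD)

lemma rel_mono: "E \<subseteq> E' \<Longrightarrow> rel E \<subseteq> rel E'"
  unfolding rel_def by auto

lemma rtr_mono: "E \<subseteq> E' \<Longrightarrow> (u, v) \<in> (rel E)\<^sup>* \<Longrightarrow> (u, v) \<in> (rel E')\<^sup>*"
  using rtrancl_mono[OF rel_mono] by blast

lemma reach_self: "u \<in> reach E u"
  unfolding reach_def by simp

lemma reach_trans: "y \<in> reach E u \<Longrightarrow> z \<in> reach E y \<Longrightarrow> z \<in> reach E u"
  unfolding reach_def by auto

lemma reach_sym: "y \<in> reach E u \<Longrightarrow> u \<in> reach E y"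
  unfolding reach_def by (auto intro: rtr_sym)

lemma reach_step: "y \<in> reach E u \<Longrightarrow> {y, z} \<in> E \<Longrightarrow> z \<in> reach E u"
  unfolding reach_def rel_def by (auto intro: rtrancl_into_rtrancl)

lemma reach_eq: "y \<in> reach E u \<Longrightarrow> reach E y = reach E u"
  by (meson reach_sym reach_trans subsetI subset_antisym)

lemma reach_mono: "E \<subseteq> E' \<Longrightarrow> reach E u \<subseteq> reach E' u"
  unfolding reach_def using rtr_mono by blast

lemma reach_subset_union: "reach E u \<subseteq> insert u (\<Union>E)"
proof
  fix y assume "y \<in> reach E u"
  then have "(u, y) \<in> (rel E)\<^sup>*" by (simp add: reach_def)
  then show "y \<in> insert u (\<Union>E)"
    by (induction rule: rtrancl_induct) (auto simp: rel_def)
qed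

lemma reach_finite: "finite E \<Longrightarrow> \<forall>g\<in>E. finite g \<Longrightarrow> finite (reach E u)"
  using reach_subset_union by (meson finite_Union finite_insert finite_subset)

lemma reach_insert_sub:
  "reach (insert {a, b} E) x \<subseteq> reach E x \<union> reach E a \<union> reach E b"
proof
  fix y assume "y \<in> reach (insert {a, b} E) x"
  then have "(x, y) \<in> (rel (insert {a, b} E))\<^sup>*" by (simp add: reach_def)
  then show "y \<in> reach E x \<union> reach E a \<union> reach E b"
  proof (induction rule: rtrancl_induct)
    case base
    then show ?case by (simp add: reach_self)
  next
    case (step z z')
    then have e: "{z, z'} = {a, b} \<or> {z, z'} \<in> E" by (simp add: rel_def)
    then show ?case
    proof
      assume "{z, z'} = {a, b}"
      then have "z' = a \<or> z' = b" by (metis doubleton_eq_iff)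
      then show ?thesis using reach_self by blast
    next
      assume "{z, z'} \<in> E"
      then show ?thesis using step.IH reach_step by blast
    qed
  qed
qed

lemma cnt:
  assumes "finite E" "\<forall>g\<in>E. card g = 2"
  shows "card (reach E u) \<le> card {g\<in>E. g \<subseteq> reach E u} + 1"
  using assms
proof (induction E arbitrary: u rule: finite_induct)
  case empty
  have "reach {} u = {u}" unfolding reach_def rel_def by auto
  then show ?case by simp
next
  case (insert e E)
  have fing: "\<forall>g\<in>insert e E. finite g" using insert.prems by (metis card.infinite zero_neq_numeral)
  from insert.prems obtain a b where eab: "e = {a, b}" "a \<noteq> b" by (meson card_2_iff insertI1)
  let ?R = "reach (insert e E) u"
  have IH: "\<And>x. card (reach E x) \<le> card {g\<in>E. g \<subseteq> reach E x} + 1"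
    using insert.IH insert.prems by blast
  have finR: "finite ?R" using reach_finite fing insert.hyps by blast
  have finE': "finite {g\<in>insert e E. g \<subseteq> ?R}" using insert.hyps by simp
  show ?case
  proof (cases "a \<in> ?R")
    case True
    have bR: "b \<in> ?R" using reach_step[OF True] eab by simp
    let ?X = "reach E a" and ?Y = "reach E b"
    have Ra: "reach (insert e E) a = ?R" using reach_eq[OF True] .
    have R1: "?R \<subseteq> ?X \<union> ?Y"
      using reach_insert_sub[of a b E a] Ra eab by simp
    have R2: "?X \<subseteq> ?R" using reach_mono[of E "insert e E" a] Ra by auto
    have R3: "?Y \<subseteq> ?R" using reach_mono[of E "insert e E" b] reach_eq[OF bR] by auto
    have RXY: "?R = ?X \<union> ?Y" using R1 R2 R3 by (rule_tac equalityI) simp_all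
    show ?thesis
    proof (cases "?X \<inter> ?Y = {}")
      case False
      then obtain z where "z \<in> ?X" "z \<in> ?Y" by blast
      then have "b \<in> ?X" using reach_trans[OF \<open>z \<in> ?X\<close> reach_sym[OF \<open>z \<in> ?Y\<close>]] by simp
      then have "?Y \<subseteq> ?X" using reach_eq by blast
      then have RX: "?R = ?X" using RXY by blast
      have "{g\<in>E. g \<subseteq> ?X} \<subseteq> {g\<in>insert e E. g \<subseteq> ?R}" using RX by auto
      then have "card {g\<in>E. g \<subseteq> ?X} \<le> card {g\<in>insert e E. g \<subseteq> ?R}"
        by (rule card_mono[OF finE'])
      then show ?thesis using IH[of a] RX by simp
    next
      case True
      have finX: "finite ?X" "finite ?Y" using finR R2 R3 finite_subset by auto
      have c1: "card ?R = card ?X + card ?Y" using RXY True finX card_Un_disjoint by simp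
      let ?A = "{g\<in>E. g \<subseteq> ?X}" and ?B = "{g\<in>E. g \<subseteq> ?Y}"
      have dAB: "?A \<inter> ?B = {}"
      proof (rule ccontr)
        assume "?A \<inter> ?B \<noteq> {}"
        then obtain g where "g \<in> E" "g \<subseteq> ?X" "g \<subseteq> ?Y" by blast
        then have "g = {}" using True by blast
        then show False using insert.prems \<open>g \<in> E\<close> by auto
      qed
      have eAB: "e \<notin> ?A \<union> ?B" using insert.hyps by auto
      have sub: "insert e (?A \<union> ?B) \<subseteq> {g\<in>insert e E. g \<subseteq> ?R}"
      proof -
        have "e \<subseteq> ?R" using eab bR \<open>a \<in> ?R\<close> by auto
        moreover have "?A \<union> ?B \<subseteq> {g\<in>insert e E. g \<subseteq> ?R}" using RXY by blast
        ultimately show ?thesis by blast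
      qed
      have fAB: "finite ?A" "finite ?B" using insert.hyps by auto
      have "card (insert e (?A \<union> ?B)) = card ?A + card ?B + 1"
      proof -
        have "card (insert e (?A \<union> ?B)) = card (?A \<union> ?B) + 1"
          using card_insert_disjoint[OF finite_UnI[OF fAB] eAB] by simp
        also have "card (?A \<union> ?B) = card ?A + card ?B"
          using card_Un_disjoint[OF fAB dAB] .
        finally show ?thesis .
      qed
      moreover have "card (insert e (?A \<union> ?B)) \<le> card {g\<in>insert e E. g \<subseteq> ?R}"
        using card_mono[OF finE' sub] .
      ultimately show ?thesis using c1 IH[of a] IH[of b] by linarith
    qed
  next
    case False
    have bR: "b \<notin> ?R"
    proof
      assume "b \<in> ?R"
      moreover have "{b, a} \<in> insert e E" using eab by (simp add: insert_commute)
      ultimately have "a \<in> ?R" by (rule reach_step)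
      then show False using False by simp
    qed
    have "?R \<subseteq> reach E u"
    proof
      fix y assume "y \<in> ?R"
      then have "(u, y) \<in> (rel (insert e E))\<^sup>*" by (simp add: reach_def)
      then show "y \<in> reach E u"
      proof (induction rule: rtrancl_induct)
        case base
        then show ?case by (simp add: reach_self)
      next
        case (step z z')
        have zR: "z \<in> ?R" using step.hyps(1) by (simp add: reach_def)
        have "{z, z'} \<in> insert e E" using step.hyps(2) by (simp add: rel_def)
        moreover have "{z, z'} \<noteq> e" using zR False bR eab by auto
        ultimately have "{z, z'} \<in> E" by simp
        then show ?case using step.IH reach_step by blast
      qed
    qed
    then have RE: "?R = reach E u" using reach_mono[of E "insert e E" u] by auto
    have "{g\<in>E. g \<subseteq> ?R} \<subseteq> {g\<in>insert e E. g \<subseteq> ?R}" by auto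
    then have "card {g\<in>E. g \<subseteq> ?R} \<le> card {g\<in>insert e E. g \<subseteq> ?R}"
      by (rule card_mono[OF finE'])
    then show ?thesis using IH[of u] RE by simp
  qed
qed




lemma fs_aux:
  "(x, p) \<in> rel E ^^ m \<Longrightarrow> (x, p) \<in> (rel (E - {{y, y2}}))\<^sup>* \<or> (\<exists>k\<le>m. (y, p) \<in> rel E ^^ k)"
proof (induction m arbitrary: x)
  case 0
  then show ?case by simp
next
  case (Suc m)
  from relpow_Suc_D2[OF Suc.prems] obtain z where z: "(x, z) \<in> rel E" "(z, p) \<in> rel E ^^ m" by blast
  from Suc.IH[OF z(2)] show ?case
  proof
    assume zp: "(z, p) \<in> (rel (E - {{y, y2}}))\<^sup>*"
    show ?thesis
    proof (cases "{x, z} = {y, y2}")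
      case True
      then have "x = y \<or> z = y" by (metis doubleton_eq_iff)
      then show ?thesis using Suc.prems z(2) by (metis le_Suc_eq order_refl)
    next
      case False
      then have "(x, z) \<in> rel (E - {{y, y2}})" using z(1) by (simp add: rel_def)
      then show ?thesis using zp by (meson converse_rtrancl_into_rtrancl)
    qed
  next
    assume "\<exists>k\<le>m. (y, p) \<in> rel E ^^ k"
    then show ?thesis using le_Suc_eq by blast
  qed
qed

lemma first_step:
  assumes "(v, p) \<in> (rel E)\<^sup>*" "v \<noteq> p"
  shows "\<exists>x. {v, x} \<in> E \<and> (x, p) \<in> (rel (E - {{v, x}}))\<^sup>*"
proof -
  have ex: "\<exists>n. (v, p) \<in> rel E ^^ n" using assms(1) rtrancl_power by blast
  define n where "n = (LEAST n. (v, p) \<in> rel E ^^ n)"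
  have n: "(v, p) \<in> rel E ^^ n" unfolding n_def using ex by (rule LeastI_ex)
  have "n \<noteq> 0"
  proof
    assume "n = 0"
    then show False using n assms(2) by simp
  qed
  then obtain m where m: "n = Suc m" using not0_implies_Suc by blast
  from relpow_Suc_D2[OF n[unfolded m]] obtain x where x: "(v, x) \<in> rel E" "(x, p) \<in> rel E ^^ m" by blast
  from fs_aux[OF x(2), of v x] show ?thesis
  proof
    assume "(x, p) \<in> (rel (E - {{v, x}}))\<^sup>*"
    then show ?thesis using x(1) by (auto simp: rel_def)
  next
    assume "\<exists>k\<le>m. (v, p) \<in> rel E ^^ k"
    then obtain k where "k \<le> m" "(v, p) \<in> rel E ^^ k" by blast
    then have "n \<le> k" unfolding n_def by (rule_tac Least_le) simp
    then show ?thesis using \<open>k \<le> m\<close> m by simp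
  qed
qed

definition tailp :: "nat set \<Rightarrow> nat set set \<Rightarrow> nat set \<Rightarrow> bool" where
  "tailp V E T \<longleftrightarrow> T \<subseteq> V \<and> connected_in E T \<and> card {e\<in>E. e \<inter> T \<noteq> {} \<and> e \<inter> (V - T) \<noteq> {}} = 1"

locale tree =
  fixes V :: "nat set" and E :: "nat set set"
  assumes finV: "finite V"
    and edgesV: "E \<subseteq> {{u, v} | u v. u \<in> V \<and> v \<in> V \<and> u \<noteq> v}"
    and conn: "connected_in E V"
    and cardE: "card E + 1 = card V"
begin

abbreviation side :: "nat set \<Rightarrow> nat \<Rightarrow> nat set" where
  "side e u \<equiv> reach (E - {e}) u"

lemma edge_obt: "g \<in> E \<Longrightarrow> \<exists>u v. g = {u, v} \<and> u \<in> V \<and> v \<in> V \<and> u \<noteq> v"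
  using edgesV by blast

lemma edge_sub: "g \<in> E \<Longrightarrow> g \<subseteq> V"
  using edge_obt by blast

lemma edge_card: "g \<in> E \<Longrightarrow> card g = 2"
proof -
  assume "g \<in> E"
  then obtain u v where "g = {u, v}" "u \<noteq> v" using edge_obt by blast
  then show ?thesis by simp
qed

lemma finE: "finite E"
proof -
  have "E \<subseteq> Pow V" using edge_sub by blast
  then show ?thesis using finV by (meson finite_Pow_iff finite_subset)
qed

lemma edge_in: "{u, w} \<in> E \<Longrightarrow> u \<in> V \<and> w \<in> V \<and> u \<noteq> w"
proof -
  assume a: "{u, w} \<in> E"
  then obtain x y where "{u, w} = {x, y}" "x \<in> V" "y \<in> V" "x \<noteq> y" using edge_obt by blast
  then show ?thesis by (metis doubleton_eq_iff)
qed

lemma reach_subV: "u \<in> V \<Longrightarrow> E' \<subseteq> E \<Longrightarrow> reach E' u \<subseteq> V"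
  using reach_subset_union[of E' u] edge_sub by blast

lemma V_ne: "V \<noteq> {}" using conn unfolding connected_in_def by simp

lemma conn_reach: "u \<in> V \<Longrightarrow> V \<subseteq> reach E u"
proof
  fix y assume "u \<in> V" "y \<in> V"
  then have "(u, y) \<in> (adj_in E V)\<^sup>*" using conn unfolding connected_in_def by blast
  moreover have "adj_in E V \<subseteq> rel E" unfolding adj_in_def rel_def by auto
  ultimately show "y \<in> reach E u" unfolding reach_def using rtrancl_mono by blast
qed

lemma part_union_gen:
  assumes "e \<in> E" "e = {u, w}" "(u, y) \<in> (rel E)\<^sup>*"
  shows "y \<in> side e u \<union> side e w"
  using assms(3)
proof (induction rule: rtrancl_induct)
  case base
  then show ?case by (simp add: reach_self)
next
  case (step z z')
  have zz: "{z, z'} \<in> E" using step.hyps(2) by (simp add: rel_def)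
  show ?case
  proof (cases "{z, z'} = e")
    case True
    then have "z' = u \<or> z' = w" using assms(2) by (metis doubleton_eq_iff insertI1)
    then show ?thesis using reach_self by blast
  next
    case False
    then have "{z, z'} \<in> E - {e}" using zz by simp
    then show ?thesis using step.IH reach_step by blast
  qed
qed

lemma part_union:
  assumes "e \<in> E" "e = {u, w}"
  shows "V \<subseteq> side e u \<union> side e w"
proof
  fix y assume "y \<in> V"
  have "u \<in> V" using assms edge_in by blast
  then have "(u, y) \<in> (rel E)\<^sup>*" using conn_reach \<open>y \<in> V\<close> unfolding reach_def by blast
  then show "y \<in> side e u \<union> side e w" using part_union_gen assms by blast
qed

lemma side_subV: "u \<in> V \<Longrightarrow> side e u \<subseteq> V"
  using reach_subV by blast

lemma side_fin: "u \<in> V \<Longrightarrow> finite (side e u)"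
  using side_subV finV finite_subset by blast

lemma part_disj:
  assumes "e \<in> E" "e = {u, w}"
  shows "side e u \<inter> side e w = {}"
proof (rule ccontr)
  assume "side e u \<inter> side e w \<noteq> {}"
  then obtain y where y: "y \<in> side e u" "y \<in> side e w" by blast
  have uV: "u \<in> V" using assms edge_in by blast
  have "w \<in> side e u" using reach_trans[OF y(1) reach_sym[OF y(2)]] .
  then have "side e w \<subseteq> side e u" using reach_eq by blast
  then have VS: "V \<subseteq> side e u" using part_union[OF assms] by blast
  have fin: "finite (side e u)" using side_fin uV .
  have c1: "card V \<le> card (side e u)" using card_mono[OF fin VS] .
  have fE: "finite (E - {e})" using finE by simp
  have "\<forall>g\<in>E - {e}. card g = 2" using edge_card by blast
  from cnt[OF fE this, of u]
  have c2: "card (side e u) \<le> card {g\<in>E - {e}. g \<subseteq> side e u} + 1" .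
  have "card {g\<in>E - {e}. g \<subseteq> side e u} \<le> card (E - {e})"
    by (rule card_mono[OF fE]) blast
  also have "card (E - {e}) = card E - 1" using assms(1) finE by simp
  finally have "card {g\<in>E - {e}. g \<subseteq> side e u} \<le> card E - 1" .
  then show False
  proof -
    have "card E > 0" using finE assms(1) card_gt_0_iff by blast
    then show False using c1 c2 cardE \<open>card {g\<in>E - {e}. g \<subseteq> side e u} \<le> card E - 1\<close> by linarith
  qed
qed

end

lemma adj_sym: "sym (adj_in E T)"
  unfolding adj_in_def sym_def by (auto simp: insert_commute)

lemma conn_from:
  assumes "T \<noteq> {}" "u \<in> T" "\<forall>y\<in>T. (u, y) \<in> (adj_in E T)\<^sup>*"
  shows "connected_in E T"
  unfolding connected_in_def
proof (intro conjI ballI)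
  show "T \<noteq> {}" by fact
  fix a b assume "a \<in> T" "b \<in> T"
  have "(u, a) \<in> (adj_in E T)\<^sup>*" using assms(3) \<open>a \<in> T\<close> by blast
  then have "(a, u) \<in> (adj_in E T)\<^sup>*" by (rule symD[OF sym_rtrancl[OF adj_sym]])
  moreover have "(u, b) \<in> (adj_in E T)\<^sup>*" using assms(3) \<open>b \<in> T\<close> by blast
  ultimately show "(a, b) \<in> (adj_in E T)\<^sup>*" by (rule rtrancl_trans)
qed

context tree begin

lemma side_conn:
  assumes "u \<in> V"
  shows "connected_in E (side e u)"
proof (rule conn_from[of _ u])
  show "side e u \<noteq> {}" "u \<in> side e u" using reach_self by auto
  show "\<forall>y\<in>side e u. (u, y) \<in> (adj_in E (side e u))\<^sup>*"
  proof
    fix y assume "y \<in> side e u"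
    then have "(u, y) \<in> (rel (E - {e}))\<^sup>*" by (simp add: reach_def)
    then show "(u, y) \<in> (adj_in E (side e u))\<^sup>*"
    proof (induction rule: rtrancl_induct)
      case base
      then show ?case by simp
    next
      case (step z z')
      have "z \<in> side e u" using step.hyps(1) by (simp add: reach_def)
      moreover have "z' \<in> side e u" using rtrancl_into_rtrancl[OF step.hyps(1) step.hyps(2)] by (simp add: reach_def)
      moreover have "{z, z'} \<in> E" using step.hyps(2) by (simp add: rel_def)
      ultimately have "(z, z') \<in> adj_in E (side e u)" by (simp add: adj_in_def)
      then show ?case by (rule rtrancl_into_rtrancl[OF step.IH])
    qed
  qed
qed

lemma side_cross:
  assumes "e \<in> E" "e = {u, w}"
  shows "{g\<in>E. g \<inter> side e u \<noteq> {} \<and> g \<inter> (V - side e u) \<noteq> {}} = {e}"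
proof (rule equalityI)
  have uw: "u \<in> V" "w \<in> V" using assms edge_in by auto
  have "w \<notin> side e u" using part_disj[OF assms] reach_self by blast
  then show "{e} \<subseteq> {g\<in>E. g \<inter> side e u \<noteq> {} \<and> g \<inter> (V - side e u) \<noteq> {}}"
    using assms uw reach_self by auto
next
  show "{g\<in>E. g \<inter> side e u \<noteq> {} \<and> g \<inter> (V - side e u) \<noteq> {}} \<subseteq> {e}"
  proof
    fix g assume g: "g \<in> {g\<in>E. g \<inter> side e u \<noteq> {} \<and> g \<inter> (V - side e u) \<noteq> {}}"
    show "g \<in> {e}"
    proof (rule ccontr)
      assume ne: "g \<notin> {e}"
      obtain x y where xy: "g = {x, y}" using g edge_obt by blast
      have gE: "g \<in> E - {e}" using g ne by simp
      have "x \<in> side e u \<or> y \<in> side e u" using g xy by auto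
      moreover have "{x, y} \<in> E - {e}" "{y, x} \<in> E - {e}" using gE xy by (auto simp: insert_commute)
      ultimately have "x \<in> side e u \<and> y \<in> side e u"
        using reach_step[of x "E - {e}" u y] reach_step[of y "E - {e}" u x] by blast
      then show False using g xy by auto
    qed
  qed
qed

lemma side_tail:
  assumes "e \<in> E" "e = {u, w}"
  shows "tailp V E (side e u)"
proof -
  have uV: "u \<in> V" using assms edge_in by auto
  have "card {g\<in>E. g \<inter> side e u \<noteq> {} \<and> g \<inter> (V - side e u) \<noteq> {}} = 1"
    using side_cross[OF assms] by simp
  then show ?thesis unfolding tailp_def
    using side_subV[OF uV] side_conn[OF uV] by blast
qed

lemma tail_side:
  assumes "tailp V E T"
  shows "\<exists>u w. {u, w} \<in> E \<and> u \<in> T \<and> w \<notin> T \<and> T = side {u, w} u"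
proof -
  let ?C = "{e\<in>E. e \<inter> T \<noteq> {} \<and> e \<inter> (V - T) \<noteq> {}}"
  have TV: "T \<subseteq> V" and Tc: "connected_in E T" and c1: "card ?C = 1" using assms by (auto simp: tailp_def)
  obtain e where Ce: "?C = {e}" using card_1_singletonE[OF c1] by blast
  then have eE: "e \<in> E" "e \<inter> T \<noteq> {}" "e \<inter> (V - T) \<noteq> {}" by auto
  obtain x y where xy: "e = {x, y}" using eE(1) edge_obt by blast
  obtain u w where uw: "e = {u, w}" "u \<in> T" "w \<notin> T"
  proof (cases "x \<in> T")
    case True
    then have "y \<notin> T" using eE(3) xy by auto
    then show ?thesis using that[of x y] True xy by simp
  next
    case False
    then have "y \<in> T" using eE(2) xy by auto
    then show ?thesis using that[of y x] False xy by (simp add: insert_commute)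
  qed
  have "T = side e u"
  proof (rule equalityI)
    show "T \<subseteq> side e u"
    proof
      fix y assume "y \<in> T"
      then have "(u, y) \<in> (adj_in E T)\<^sup>*" using Tc uw(2) unfolding connected_in_def by blast
      moreover have "adj_in E T \<subseteq> rel (E - {e})"
      proof
        fix p assume "p \<in> adj_in E T"
        then obtain a b where ab: "p = (a, b)" "a \<in> T" "b \<in> T" "{a, b} \<in> E" unfolding adj_in_def by blast
        have "{a, b} \<noteq> e"
        proof
          assume "{a, b} = e"
          then have "w \<in> {a, b}" using uw by simp
          then show False using ab uw by blast
        qed
        then show "p \<in> rel (E - {e})" using ab unfolding rel_def by simp
      qed
      ultimately show "y \<in> side e u" unfolding reach_def using rtrancl_mono by blast
    qed
  next
    show "side e u \<subseteq> T"
    proof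
      fix y assume "y \<in> side e u"
      then have "(u, y) \<in> (rel (E - {e}))\<^sup>*" by (simp add: reach_def)
      then show "y \<in> T"
      proof (induction rule: rtrancl_induct)
        case base
        then show ?case using uw by simp
      next
        case (step z z')
        have g: "{z, z'} \<in> E" "{z, z'} \<noteq> e" using step.hyps(2) by (auto simp: rel_def)
        show ?case
        proof (rule ccontr)
          assume "z' \<notin> T"
          moreover have "z' \<in> V" using g(1) edge_in by blast
          ultimately have "z' \<in> {z, z'} \<inter> (V - T)" by simp
          moreover have "z \<in> {z, z'} \<inter> T" using step.IH by simp
          ultimately have "{z, z'} \<in> ?C" using g(1) by blast
          then have "{z, z'} = e" using Ce by simp
          then show False using g(2) by simp
        qed
      qed
    qed
  qed
  then show ?thesis using uw eE(1) by blast
qed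

end




context tree begin

lemma side_grow:
  assumes vx: "{v, x} \<in> E" and xy: "{x, y} \<in> E" and yv: "y \<noteq> v"
  shows "side {v, x} v \<subseteq> side {x, y} x" "x \<in> side {x, y} x" "x \<notin> side {v, x} v"
proof -
  have vxne: "v \<noteq> x" using edge_in[OF vx] by simp
  have ne: "{v, x} \<noteq> {x, y}"
  proof
    assume "{v, x} = {x, y}"
    then have "v = y" using vxne by (metis doubleton_eq_iff)
    then show False using yv by simp
  qed
  have xv: "{x, v} \<in> E - {{x, y}}" using vx ne by (simp add: insert_commute)
  have vS: "v \<in> side {x, y} x" using reach_step[OF reach_self xv] .
  have xnot: "x \<notin> side {v, x} v"
  proof
    assume "x \<in> side {v, x} v"
    moreover have "x \<in> side {v, x} x" by (rule reach_self)
    ultimately show False using part_disj[OF vx refl] by blast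
  qed
  show "x \<notin> side {v, x} v" by (rule xnot)
  show "x \<in> side {x, y} x" by (rule reach_self)
  show "side {v, x} v \<subseteq> side {x, y} x"
  proof
    fix z assume "z \<in> side {v, x} v"
    then have "(v, z) \<in> (rel (E - {{v, x}}))\<^sup>*" by (simp add: reach_def)
    then show "z \<in> side {x, y} x"
    proof (induction rule: rtrancl_induct)
      case base
      then show ?case by (rule vS)
    next
      case (step z z')
      have g: "{z, z'} \<in> E" "{z, z'} \<noteq> {v, x}" using step.hyps(2) by (auto simp: rel_def)
      show ?case
      proof (cases "{z, z'} = {x, y}")
        case True
        then have "(z = x \<and> z' = y) \<or> (z = y \<and> z' = x)" by (metis doubleton_eq_iff)
        then show ?thesis
        proof
          assume "z = x \<and> z' = y"
          then have "x \<in> side {v, x} v" using step.hyps(1) by (simp add: reach_def)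
          then show ?thesis using xnot by simp
        next
          assume "z = y \<and> z' = x"
          then show ?thesis using reach_self by simp
        qed
      next
        case False
        then have "{z, z'} \<in> E - {{x, y}}" using g by simp
        then show ?thesis using reach_step[OF step.IH] by blast
      qed
    qed
  qed
qed

lemma key:
  fixes P :: "nat set \<Rightarrow> bool"
  assumes FV: "F \<subseteq> V" and Fne: "F \<noteq> {}"
    and H: "\<forall>v\<in>F. \<exists>x. {v, x} \<in> E \<and> P (side {v, x} v)"
    and NB: "\<forall>u w. {u, w} \<in> E \<longrightarrow> \<not> (P (side {u, w} u) \<and> P (side {u, w} w))"
  shows "\<exists>v\<in>F. \<exists>x. x \<notin> F \<and> {v, x} \<in> E \<and> P (side {v, x} v)"
proof (rule ccontr)
  assume contra: "\<not> ?thesis"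
  let ?Q = "{(v, x). v \<in> F \<and> {v, x} \<in> E \<and> P (side {v, x} v)}"
  let ?f = "\<lambda>q. card (side {fst q, snd q} (fst q))"
  have QV: "?Q \<subseteq> V \<times> V" using FV edge_in by auto
  have finQ: "finite ?Q" using finite_subset[OF QV] finV by blast
  obtain v0 where "v0 \<in> F" using Fne by blast
  then obtain x0 where "{v0, x0} \<in> E \<and> P (side {v0, x0} v0)" using H by blast
  then have "(v0, x0) \<in> ?Q" using \<open>v0 \<in> F\<close> by simp
  then have Qne: "?Q \<noteq> {}" by blast
  define m where "m = Max (?f ` ?Q)"
  have "m \<in> ?f ` ?Q" unfolding m_def using finQ Qne by (intro Max_in) auto
  then obtain q where q: "q \<in> ?Q" "?f q = m" by blast
  obtain v x where qvx: "q = (v, x)" by (cases q)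
  have v: "v \<in> F" "{v, x} \<in> E" "P (side {v, x} v)" using q(1) qvx by auto
  have fmax: "\<And>q'. q' \<in> ?Q \<Longrightarrow> ?f q' \<le> m" unfolding m_def using finQ by (intro Max_ge) auto
  have "x \<in> F" using contra v by blast
  then obtain y where y: "{x, y} \<in> E" "P (side {x, y} x)" using H by blast
  show False
  proof (cases "y = v")
    case True
    then have "P (side {v, x} x)" using y by (simp add: insert_commute)
    then show False using NB v(2,3) by blast
  next
    case False
    note sg = side_grow[OF v(2) y(1) False]
    have xV: "x \<in> V" using edge_in[OF y(1)] by simp
    have fin: "finite (side {x, y} x)" using side_fin[OF xV] .
    have "side {v, x} v \<subset> side {x, y} x" using sg by blast
    then have "card (side {v, x} v) < card (side {x, y} x)" using fin psubset_card_mono by blast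
    moreover have "(x, y) \<in> ?Q" using \<open>x \<in> F\<close> y by simp
    ultimately show False using fmax[of "(x, y)"] q(2) qvx by simp
  qed
qed

lemma side_mono:
  assumes eE: "e \<in> E" and e: "e = {u, w}" and vS: "v \<in> side e u"
  shows "\<exists>x. {v, x} \<in> E \<and> side {v, x} v \<subseteq> side e u"
proof (cases "v = u")
  case True
  then show ?thesis using eE e by blast
next
  case False
  have "(u, v) \<in> (rel (E - {e}))\<^sup>*" using vS by (simp add: reach_def)
  then have "(v, u) \<in> (rel (E - {e}))\<^sup>*" by (rule rtr_sym)
  from first_step[OF this False]
  obtain x where x: "{v, x} \<in> E - {e}" "(x, u) \<in> (rel (E - {e} - {{v, x}}))\<^sup>*" by blast
  let ?f = "{v, x}"
  have fE: "?f \<in> E" and fe: "?f \<noteq> e" using x(1) by auto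
  have "(x, u) \<in> (rel (E - {?f}))\<^sup>*" using rtr_mono[OF _ x(2), of "E - {?f}"] by blast
  then have uS: "u \<in> side ?f x" unfolding reach_def by (simp add: rtr_sym)
  have "e \<in> E - {?f}" using eE fe by simp
  then have wS: "w \<in> side ?f x" using reach_step[OF uS] e by simp
  have vV: "v \<in> V" using edge_in[OF fE] by simp
  have claim: "\<And>z. (w, z) \<in> (rel (E - {e}))\<^sup>* \<Longrightarrow> z \<in> side ?f x"
  proof -
    fix z assume "(w, z) \<in> (rel (E - {e}))\<^sup>*"
    then show "z \<in> side ?f x"
    proof (induction rule: rtrancl_induct)
      case base
      then show ?case by (rule wS)
    next
      case (step z z')
      have g: "{z, z'} \<in> E" "{z, z'} \<noteq> e" using step.hyps(2) by (auto simp: rel_def)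
      show ?case
      proof (cases "{z, z'} = ?f")
        case True
        then have "(z = v \<and> z' = x) \<or> (z = x \<and> z' = v)" by (metis doubleton_eq_iff)
        then show ?thesis
        proof
          assume "z = v \<and> z' = x"
          then have "v \<in> side ?f x" using step.IH by simp
          then show ?thesis using part_disj[OF fE refl] reach_self[of v] by blast
        next
          assume zz: "z = x \<and> z' = v"
          have "(w, v) \<in> (rel (E - {e}))\<^sup>*" using rtrancl_into_rtrancl[OF step.hyps(1) step.hyps(2)] zz by simp
          then have "v \<in> side e w" by (simp add: reach_def)
          then show ?thesis using part_disj[OF eE e] vS by blast
        qed
      next
        case False
        then have "{z, z'} \<in> E - {?f}" using g by simp
        then show ?thesis using reach_step[OF step.IH] by blast
      qed
    qed
  qed
  have "side ?f v \<subseteq> side e u"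
  proof
    fix y assume yS: "y \<in> side ?f v"
    then have "y \<in> V" using side_subV[OF vV] by blast
    then have "y \<in> side e u \<or> y \<in> side e w" using part_union[OF eE e] by blast
    then show "y \<in> side e u"
    proof
      assume "y \<in> side e w"
      then have "y \<in> side ?f x" using claim by (simp add: reach_def)
      then show ?thesis using part_disj[OF fE refl] yS by blast
    qed
  qed
  then show ?thesis using fE by blast
qed

end



context tree begin

lemma double_count:
  assumes "S \<subseteq> V"
  shows "(\<Sum>v\<in>S. card {g\<in>E. v \<in> g}) = (\<Sum>g\<in>E. card (g \<inter> S))"
proof -
  have fS: "finite S" using assms finV finite_subset by blast
  have "(\<Sum>v\<in>S. card {g\<in>E. v \<in> g}) = (\<Sum>v\<in>S. \<Sum>g\<in>E. if v \<in> g then 1 else 0)"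
  proof (rule sum.cong[OF refl])
    fix v assume "v \<in> S"
    have "card {g\<in>E. v \<in> g} = (\<Sum>g\<in>{g\<in>E. v \<in> g}. 1)" by simp
    also have "\<dots> = (\<Sum>g\<in>E. if v \<in> g then 1 else 0)" by (rule sum.inter_filter[OF finE])
    finally show "card {g\<in>E. v \<in> g} = (\<Sum>g\<in>E. if v \<in> g then 1 else 0)" .
  qed
  also have "\<dots> = (\<Sum>g\<in>E. \<Sum>v\<in>S. if v \<in> g then 1 else 0)" by (rule sum.swap)
  also have "\<dots> = (\<Sum>g\<in>E. card (g \<inter> S))"
  proof (rule sum.cong[OF refl])
    fix g assume "g \<in> E"
    have "g \<inter> S = {v\<in>S. v \<in> g}" by blast
    then have "card (g \<inter> S) = (\<Sum>v\<in>{v\<in>S. v \<in> g}. 1)" by simp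
    also have "\<dots> = (\<Sum>v\<in>S. if v \<in> g then 1 else 0)" by (rule sum.inter_filter[OF fS])
    finally show "(\<Sum>v\<in>S. if v \<in> g then 1 else 0) = card (g \<inter> S)" by simp
  qed
  finally show ?thesis .
qed

lemma label_count:
  fixes lf :: "nat \<Rightarrow> nat" and I :: "nat set"
  assumes eE: "e \<in> E" and e: "e = {u, w}" and finI: "finite I"
    and deg: "\<forall>v\<in>V. card {g\<in>E. v \<in> g} + card {i\<in>I. lf i = v} \<ge> 3"
  shows "card {i\<in>I. lf i \<in> side e u} \<ge> 2"
proof -
  let ?S = "side e u" and ?W = "side e w"
  let ?ES = "{g\<in>E - {e}. g \<subseteq> ?S}" and ?EW = "{g\<in>E - {e}. g \<subseteq> ?W}"
  have uw: "u \<in> V" "w \<in> V" "u \<noteq> w" using edge_in eE e by auto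
  have SV: "?S \<subseteq> V" and WV: "?W \<subseteq> V" using side_subV uw by auto
  have fS: "finite ?S" and fW: "finite ?W" using side_fin uw by auto
  have disj: "?S \<inter> ?W = {}" using part_disj[OF eE e] .
  have un: "V = ?S \<union> ?W" using part_union[OF eE e] SV WV by blast
  have cV: "card V = card ?S + card ?W" using un disj fS fW card_Un_disjoint by simp
  have fE': "finite (E - {e})" using finE by simp
  have c2: "\<forall>g\<in>E - {e}. card g = 2" using edge_card by blast
  have cS: "card ?S \<le> card ?ES + 1" using cnt[OF fE' c2] .
  have cW: "card ?W \<le> card ?EW + 1" using cnt[OF fE' c2] .
  have dE: "?ES \<inter> ?EW = {}"
  proof (rule ccontr)
    assume "?ES \<inter> ?EW \<noteq> {}"
    then obtain g where g: "g \<in> E" "g \<subseteq> ?S" "g \<subseteq> ?W" by blast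
    then have "g = {}" using disj by blast
    then show False using edge_card[OF g(1)] by simp
  qed
  have fES: "finite ?ES" "finite ?EW" using fE' by auto
  have "insert e (?ES \<union> ?EW) \<subseteq> E" using eE by blast
  then have "card (insert e (?ES \<union> ?EW)) \<le> card E" using card_mono[OF finE] by blast
  moreover have "card (insert e (?ES \<union> ?EW)) = card (?ES \<union> ?EW) + 1"
    using card_insert_disjoint[OF finite_UnI[OF fES]] by simp
  moreover have "card (?ES \<union> ?EW) = card ?ES + card ?EW" using card_Un_disjoint[OF fES dE] .
  ultimately have cES: "card ?ES + 1 = card ?S" using cS cW cV cardE by linarith
  have hval: "\<And>g. g \<in> E \<Longrightarrow> card (g \<inter> ?S) = (if g \<in> ?ES then 2 else if g = e then 1 else 0)"
  proof -
    fix g assume gE: "g \<in> E"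
    show "card (g \<inter> ?S) = (if g \<in> ?ES then 2 else if g = e then 1 else 0)"
    proof (cases "g = e")
      case True
      have "w \<notin> ?S" using disj reach_self by blast
      then have "g \<inter> ?S = {u}" using True e reach_self by auto
      moreover have "g \<notin> ?ES" using True by simp
      ultimately show ?thesis using True by simp
    next
      case False
      obtain a b where ab: "g = {a, b}" using edge_obt gE by blast
      have gE': "{a, b} \<in> E - {e}" "{b, a} \<in> E - {e}" using gE False ab by (auto simp: insert_commute)
      have "a \<in> ?S \<longleftrightarrow> b \<in> ?S" using reach_step[OF _ gE'(1)] reach_step[OF _ gE'(2)] by blast
      then show ?thesis
      proof (cases "a \<in> ?S")
        case True
        then have "g \<subseteq> ?S" using ab \<open>a \<in> ?S \<longleftrightarrow> b \<in> ?S\<close> by simp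
        then have "g \<inter> ?S = g" "g \<in> ?ES" using gE False by auto
        then show ?thesis using edge_card[OF gE] by simp
      next
        case F2: False
        then have "g \<inter> ?S = {}" using ab \<open>a \<in> ?S \<longleftrightarrow> b \<in> ?S\<close> by simp
        moreover have "g \<notin> ?ES" using F2 ab by auto
        ultimately show ?thesis using False by simp
      qed
    qed
  qed
  have "(\<Sum>g\<in>E. card (g \<inter> ?S)) = (\<Sum>g\<in>E. (if g \<in> ?ES then 2 else if g = e then 1 else 0))"
    using hval by (rule sum.cong[OF refl])
  also have "\<dots> = (\<Sum>g\<in>insert e ?ES. (if g \<in> ?ES then 2 else if g = e then 1 else 0))"
    by (rule sum.mono_neutral_right[OF finE]) (use eE in auto)
  also have "\<dots> = 1 + (\<Sum>g\<in>?ES. (if g \<in> ?ES then 2 else if g = e then 1 else 0))"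
    by (subst sum.insert) (use fES in auto)
  also have "\<dots> = 1 + 2 * card ?ES" by simp
  finally have degsum: "(\<Sum>v\<in>?S. card {g\<in>E. v \<in> g}) = 1 + 2 * card ?ES"
    using double_count[OF SV] by simp
  have labsum: "(\<Sum>v\<in>?S. card {i\<in>I. lf i = v}) = card {i\<in>I. lf i \<in> ?S}"
  proof -
    have "{i\<in>I. lf i \<in> ?S} = (\<Union>v\<in>?S. {i\<in>I. lf i = v})" by blast
    moreover have "card (\<Union>v\<in>?S. {i\<in>I. lf i = v}) = (\<Sum>v\<in>?S. card {i\<in>I. lf i = v})"
      by (rule card_UN_disjoint) (use fS finI in auto)
    ultimately show ?thesis by simp
  qed
  have "(\<Sum>v\<in>?S. 3) \<le> (\<Sum>v\<in>?S. card {g\<in>E. v \<in> g} + card {i\<in>I. lf i = v})"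
    by (rule sum_mono) (use deg SV in blast)
  also have "\<dots> = 1 + 2 * card ?ES + card {i\<in>I. lf i \<in> ?S}"
    using degsum labsum by (simp add: sum.distrib)
  finally have "3 * card ?S \<le> 1 + 2 * card ?ES + card {i\<in>I. lf i \<in> ?S}" by simp
  moreover have "card ?S \<ge> 1" using fS reach_self[of u] card_0_eq by fastforce
  ultimately show ?thesis using cES by linarith
qed

end



lemma st_tree: "stable_tree n G \<Longrightarrow> tree (verts G) (edges G)"
  unfolding stable_tree_def tree_def by blast

lemma is_tail_tl: "is_tail G T = tailp (verts G) (edges G) T"
  unfolding is_tail_def tailp_def by simp

definition W :: "nat \<Rightarrow> (nat \<Rightarrow> rat) \<Rightarrow> stree \<Rightarrow> nat set \<Rightarrow> rat" where
  "W n a G T = (\<Sum>i\<in>tail_labels n G T. a i)"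

lemma W_mono:
  assumes "weight_data n a" "T \<subseteq> T'"
  shows "W n a G T \<le> W n a G T'"
  unfolding W_def
proof (rule sum_mono2)
  show "finite (tail_labels n G T')" unfolding tail_labels_def by simp
  show "tail_labels n G T \<subseteq> tail_labels n G T'" unfolding tail_labels_def using assms(2) by blast
  fix b assume "b \<in> tail_labels n G T' - tail_labels n G T"
  then show "0 \<le> a b"
    using assms(1) unfolding weight_data_def tail_labels_def by (auto intro: less_imp_le)
qed

lemma W_part:
  assumes wd: "weight_data n a" and st: "stable_tree n G" and eE: "{u, w} \<in> edges G"
  shows "W n a G (reach (edges G - {{u, w}}) u) + W n a G (reach (edges G - {{u, w}}) w) > 2"
proof -
  interpret tree "verts G" "edges G" using st_tree[OF st] .
  let ?S = "side {u, w} u" and ?T = "side {u, w} w"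
  have disj: "?S \<inter> ?T = {}" using part_disj[OF eE refl] .
  have un: "verts G \<subseteq> ?S \<union> ?T" using part_union[OF eE refl] .
  have lv: "\<forall>i\<in>{1..n}. leaf G i \<in> verts G" using st unfolding stable_tree_def by blast
  have "tail_labels n G ?S \<union> tail_labels n G ?T = {1..n}"
    unfolding tail_labels_def using lv un by blast
  moreover have "tail_labels n G ?S \<inter> tail_labels n G ?T = {}"
    unfolding tail_labels_def using disj by blast
  moreover have "finite (tail_labels n G ?S)" "finite (tail_labels n G ?T)"
    unfolding tail_labels_def by auto
  ultimately have "W n a G ?S + W n a G ?T = (\<Sum>i\<in>{1..n}. a i)"
    unfolding W_def by (metis sum.union_disjoint)
  then show ?thesis using wd unfolding weight_data_def by simp
qed

lemma Z_char:
  assumes wd: "weight_data n a" and st: "stable_tree n G"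
  shows "v \<in> weight_assignment n a G \<longleftrightarrow>
    (\<exists>x. {v, x} \<in> edges G \<and> W n a G (reach (edges G - {{v, x}}) v) \<le> 1)"
proof -
  interpret tree "verts G" "edges G" using st_tree[OF st] .
  show ?thesis
  proof
    assume "v \<in> weight_assignment n a G"
    then obtain T where T: "is_tail G T" "v \<in> T" "W n a G T \<le> 1"
      unfolding weight_assignment_def W_def by blast
    obtain u w where uw: "{u, w} \<in> edges G" "T = side {u, w} u"
      using tail_side T(1) unfolding is_tail_tl by blast
    obtain x where x: "{v, x} \<in> edges G" "side {v, x} v \<subseteq> T"
      using side_mono[OF uw(1) refl] uw(2) T(2) by blast
    have "W n a G (side {v, x} v) \<le> 1" using W_mono[OF wd x(2), of G] T(3) by simp
    then show "\<exists>x. {v, x} \<in> edges G \<and> W n a G (side {v, x} v) \<le> 1" using x by blast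
  next
    assume "\<exists>x. {v, x} \<in> edges G \<and> W n a G (side {v, x} v) \<le> 1"
    then obtain x where x: "{v, x} \<in> edges G" "W n a G (side {v, x} v) \<le> 1" by blast
    have "is_tail G (side {v, x} v)" unfolding is_tail_tl using side_tail[OF x(1) refl] .
    moreover have "v \<in> verts G" using edge_in[OF x(1)] by simp
    ultimately show "v \<in> weight_assignment n a G"
      unfolding weight_assignment_def using x(2) reach_self[of v] unfolding W_def by blast
  qed
qed

lemma part_a:
  assumes wd: "weight_data n a" and st: "stable_tree n G"
  shows "weight_assignment n a G \<subseteq> verts G \<and> weight_assignment n a G \<noteq> verts G"
proof
  show "weight_assignment n a G \<subseteq> verts G" unfolding weight_assignment_def by blast
  interpret tree "verts G" "edges G" using st_tree[OF st] .
  show "weight_assignment n a G \<noteq> verts G"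
  proof
    assume all: "weight_assignment n a G = verts G"
    let ?P = "\<lambda>S. W n a G S \<le> 1"
    have H: "\<forall>v\<in>verts G. \<exists>x. {v, x} \<in> edges G \<and> ?P (side {v, x} v)"
      using Z_char[OF wd st] all by blast
    have NB: "\<forall>u w. {u, w} \<in> edges G \<longrightarrow> \<not> (?P (side {u, w} u) \<and> ?P (side {u, w} w))"
      using W_part[OF wd st] by fastforce
    obtain v x where "x \<notin> verts G" "{v, x} \<in> edges G"
      using key[OF subset_refl V_ne H NB] by blast
    then show False using edge_in by blast
  qed
qed




lemma contractsD:
  assumes "contracts n G G' \<pi>"
  shows "stable_tree n G" "stable_tree n G'" "\<pi> ` verts G = verts G'"
    "\<forall>v'\<in>verts G'. connected_in (edges G) {v\<in>verts G. \<pi> v = v'}"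
    "\<forall>i\<in>{1..n}. leaf G' i = \<pi> (leaf G i)"
    "edges G' = {{\<pi> u, \<pi> v} | u v. {u, v} \<in> edges G \<and> \<pi> u \<noteq> \<pi> v}"
  using assms unfolding contracts_def by simp_all

lemma fiber_reach:
  assumes ct: "contracts n G G' \<pi>" and pq: "\<pi> p \<noteq> \<pi> q"
    and c: "c \<in> reach (edges G - {{p, q}}) p" "c \<in> verts G"
    and y: "y \<in> verts G" "\<pi> y = \<pi> c"
  shows "y \<in> reach (edges G - {{p, q}}) p"
proof -
  let ?X = "{v\<in>verts G. \<pi> v = \<pi> c}"
  have "\<pi> c \<in> verts G'" using contractsD(3)[OF ct] c(2) by blast
  then have Xc: "connected_in (edges G) ?X" using contractsD(4)[OF ct] by blast
  have "(c, y) \<in> (adj_in (edges G) ?X)\<^sup>*" using Xc c(2) y unfolding connected_in_def by blast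
  moreover have "adj_in (edges G) ?X \<subseteq> rel (edges G - {{p, q}})"
  proof
    fix z assume "z \<in> adj_in (edges G) ?X"
    then obtain s t where st: "z = (s, t)" "s \<in> ?X" "t \<in> ?X" "{s, t} \<in> edges G"
      unfolding adj_in_def by blast
    have "{s, t} \<noteq> {p, q}"
    proof
      assume "{s, t} = {p, q}"
      then have "(s = p \<and> t = q) \<or> (s = q \<and> t = p)" by (metis doubleton_eq_iff)
      then show False using st pq by auto
    qed
    then show "z \<in> rel (edges G - {{p, q}})" using st unfolding rel_def by simp
  qed
  ultimately have "y \<in> reach (edges G - {{p, q}}) c" unfolding reach_def using rtrancl_mono by blast
  then show ?thesis using reach_trans[OF c(1)] by blast
qed

lemma lift_sub:
  assumes ct: "contracts n G G' \<pi>" and pqE: "{p, q} \<in> edges G" and pq: "\<pi> p \<noteq> \<pi> q"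
    and z: "(\<pi> p, z') \<in> (rel (edges G' - {{\<pi> p, \<pi> q}}))\<^sup>*"
  shows "\<forall>y\<in>verts G. \<pi> y = z' \<longrightarrow> y \<in> reach (edges G - {{p, q}}) p"
  using z
proof (induction rule: rtrancl_induct)
  case base
  have pV: "p \<in> verts G" using tree.edge_in[OF st_tree[OF contractsD(1)[OF ct]] pqE] by simp
  show ?case using fiber_reach[OF ct pq reach_self pV] by blast
next
  case (step z' z'')
  have "{z', z''} \<in> edges G'" "{z', z''} \<noteq> {\<pi> p, \<pi> q}" using step.hyps(2) by (auto simp: rel_def)
  then have "{z', z''} \<in> {{\<pi> u, \<pi> v} | u v. {u, v} \<in> edges G \<and> \<pi> u \<noteq> \<pi> v}"
    using contractsD(6)[OF ct] by simp
  then obtain c d where cd: "{z', z''} = {\<pi> c, \<pi> d}" "{c, d} \<in> edges G" "\<pi> c \<noteq> \<pi> d"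
    by blast
  have "\<exists>c0 d0. \<pi> c0 = z' \<and> \<pi> d0 = z'' \<and> {c0, d0} \<in> edges G"
  proof (cases "z' = \<pi> c")
    case True
    then have "z'' = \<pi> d" using cd(1) by (metis doubleton_eq_iff)
    then show ?thesis using True cd(2) by blast
  next
    case False
    then have "z' = \<pi> d \<and> z'' = \<pi> c" using cd(1) by (metis doubleton_eq_iff)
    moreover have "{d, c} \<in> edges G" using cd(2) by (simp add: insert_commute)
    ultimately show ?thesis by blast
  qed
  then obtain c0 d0 where c0: "\<pi> c0 = z'" "\<pi> d0 = z''" "{c0, d0} \<in> edges G" by blast
  have tr: "tree (verts G) (edges G)" using st_tree[OF contractsD(1)[OF ct]] .
  have c0V: "c0 \<in> verts G" "d0 \<in> verts G" using tree.edge_in[OF tr c0(3)] by auto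
  have c0R: "c0 \<in> reach (edges G - {{p, q}}) p" using step.IH c0V c0(1) by blast
  have "{c0, d0} \<noteq> {p, q}"
  proof
    assume "{c0, d0} = {p, q}"
    then have "(c0 = p \<and> d0 = q) \<or> (c0 = q \<and> d0 = p)" by (metis doubleton_eq_iff)
    then show False using \<open>{z', z''} \<noteq> {\<pi> p, \<pi> q}\<close> c0(1,2) by (auto simp: insert_commute)
  qed
  then have d0R: "d0 \<in> reach (edges G - {{p, q}}) p" using reach_step[OF c0R] c0(3) by simp
  show ?case
  proof (intro ballI impI)
    fix y assume "y \<in> verts G" "\<pi> y = z''"
    then show "y \<in> reach (edges G - {{p, q}}) p" using fiber_reach[OF ct pq d0R c0V(2)] c0(2) by simp
  qed
qed

lemma lift_eq:
  assumes ct: "contracts n G G' \<pi>" and pqE: "{p, q} \<in> edges G" and pq: "\<pi> p \<noteq> \<pi> q"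
  shows "{y\<in>verts G. \<pi> y \<in> reach (edges G' - {{\<pi> p, \<pi> q}}) (\<pi> p)} = reach (edges G - {{p, q}}) p"
proof -
  have tr: "tree (verts G) (edges G)" using st_tree[OF contractsD(1)[OF ct]] .
  have tr': "tree (verts G') (edges G')" using st_tree[OF contractsD(2)[OF ct]] .
  have e'E: "{\<pi> p, \<pi> q} \<in> edges G'" using contractsD(6)[OF ct] pqE pq by blast
  have pV: "p \<in> verts G" "q \<in> verts G" using tree.edge_in[OF tr pqE] by auto
  show ?thesis
  proof (rule equalityI)
    show "{y\<in>verts G. \<pi> y \<in> reach (edges G' - {{\<pi> p, \<pi> q}}) (\<pi> p)} \<subseteq> reach (edges G - {{p, q}}) p"
      using lift_sub[OF ct pqE pq] unfolding reach_def by blast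
  next
    show "reach (edges G - {{p, q}}) p \<subseteq> {y\<in>verts G. \<pi> y \<in> reach (edges G' - {{\<pi> p, \<pi> q}}) (\<pi> p)}"
    proof
      fix y assume yR: "y \<in> reach (edges G - {{p, q}}) p"
      have yV: "y \<in> verts G" using tree.side_subV[OF tr pV(1)] yR by blast
      have "\<pi> y \<in> verts G'" using contractsD(3)[OF ct] yV by blast
      then have "\<pi> y \<in> reach (edges G' - {{\<pi> p, \<pi> q}}) (\<pi> p) \<or> \<pi> y \<in> reach (edges G' - {{\<pi> p, \<pi> q}}) (\<pi> q)"
        using tree.part_union[OF tr' e'E refl] by blast
      then show "y \<in> {y\<in>verts G. \<pi> y \<in> reach (edges G' - {{\<pi> p, \<pi> q}}) (\<pi> p)}"
      proof
        assume "\<pi> y \<in> reach (edges G' - {{\<pi> p, \<pi> q}}) (\<pi> q)"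
        then have "\<pi> y \<in> reach (edges G' - {{\<pi> q, \<pi> p}}) (\<pi> q)" by (simp add: insert_commute)
        moreover have qpE: "{q, p} \<in> edges G" using pqE by (simp add: insert_commute)
        ultimately have "y \<in> reach (edges G - {{q, p}}) q"
          using lift_sub[OF ct qpE pq[symmetric]] yV unfolding reach_def by blast
        then have "y \<in> reach (edges G - {{p, q}}) q" by (simp add: insert_commute)
        then show ?thesis using tree.part_disj[OF tr pqE refl] yR by blast
      qed (use yV in simp)
    qed
  qed
qed

lemma lift_labels:
  assumes ct: "contracts n G G' \<pi>" and pqE: "{p, q} \<in> edges G" and pq: "\<pi> p \<noteq> \<pi> q"
  shows "tail_labels n G' (reach (edges G' - {{\<pi> p, \<pi> q}}) (\<pi> p)) = tail_labels n G (reach (edges G - {{p, q}}) p)"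
proof -
  have lv: "\<forall>i\<in>{1..n}. leaf G i \<in> verts G" using contractsD(1)[OF ct] unfolding stable_tree_def by blast
  have ll: "\<forall>i\<in>{1..n}. leaf G' i = \<pi> (leaf G i)" using contractsD(5)[OF ct] .
  have le: "\<And>y. y \<in> verts G \<Longrightarrow> \<pi> y \<in> reach (edges G' - {{\<pi> p, \<pi> q}}) (\<pi> p) \<longleftrightarrow> y \<in> reach (edges G - {{p, q}}) p"
    using lift_eq[OF ct pqE pq] by blast
  show ?thesis unfolding tail_labels_def
  proof (rule Collect_cong)
    fix i
    show "(i \<in> {1..n} \<and> leaf G' i \<in> reach (edges G' - {{\<pi> p, \<pi> q}}) (\<pi> p)) =
          (i \<in> {1..n} \<and> leaf G i \<in> reach (edges G - {{p, q}}) p)"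
      using le[of "leaf G i"] lv ll by auto
  qed
qed




lemma edge_lift:
  assumes ct: "contracts n G G' \<pi>" and e: "{a', b'} \<in> edges G'"
  shows "\<exists>p q. \<pi> p = a' \<and> \<pi> q = b' \<and> {p, q} \<in> edges G \<and> \<pi> p \<noteq> \<pi> q"
proof -
  have "{a', b'} \<in> {{\<pi> u, \<pi> v} | u v. {u, v} \<in> edges G \<and> \<pi> u \<noteq> \<pi> v}"
    using contractsD(6)[OF ct] e by simp
  then obtain c d where cd: "{a', b'} = {\<pi> c, \<pi> d}" "{c, d} \<in> edges G" "\<pi> c \<noteq> \<pi> d" by blast
  show ?thesis
  proof (cases "a' = \<pi> c")
    case True
    then have "b' = \<pi> d" using cd(1) by (metis doubleton_eq_iff)
    then show ?thesis using True cd(2,3) by blast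
  next
    case False
    then have "a' = \<pi> d \<and> b' = \<pi> c" using cd(1) by (metis doubleton_eq_iff)
    moreover have "{d, c} \<in> edges G" using cd(2) by (simp add: insert_commute)
    ultimately show ?thesis using cd(3) by (intro exI[of _ d] exI[of _ c]) auto
  qed
qed

lemma part_b:
  assumes wd: "weight_data n a" and ct: "contracts n G G' \<pi>" and v'V: "v' \<in> verts G'"
  shows "v' \<in> weight_assignment n a G' \<longleftrightarrow> (\<forall>v\<in>verts G. \<pi> v = v' \<longrightarrow> v \<in> weight_assignment n a G)"
proof -
  have st: "stable_tree n G" and st': "stable_tree n G'" using contractsD(1,2)[OF ct] by auto
  have tr: "tree (verts G) (edges G)" using st_tree[OF st] .
  have tr': "tree (verts G') (edges G')" using st_tree[OF st'] .
  show ?thesis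
  proof
    assume "v' \<in> weight_assignment n a G'"
    then obtain x' where x': "{v', x'} \<in> edges G'" "W n a G' (reach (edges G' - {{v', x'}}) v') \<le> 1"
      using Z_char[OF wd st'] by blast
    obtain p q where pq: "\<pi> p = v'" "\<pi> q = x'" "{p, q} \<in> edges G" "\<pi> p \<noteq> \<pi> q"
      using edge_lift[OF ct x'(1)] by blast
    have Weq: "W n a G (reach (edges G - {{p, q}}) p) = W n a G' (reach (edges G' - {{v', x'}}) v')"
      unfolding W_def using lift_labels[OF ct pq(3,4)] pq(1,2) by simp
    have tail: "is_tail G (reach (edges G - {{p, q}}) p)"
      unfolding is_tail_tl using tree.side_tail[OF tr pq(3) refl] .
    show "\<forall>v\<in>verts G. \<pi> v = v' \<longrightarrow> v \<in> weight_assignment n a G"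
    proof (intro ballI impI)
      fix v assume vV: "v \<in> verts G" and pv: "\<pi> v = v'"
      have "\<pi> v \<in> reach (edges G' - {{\<pi> p, \<pi> q}}) (\<pi> p)" using pv pq(1) reach_self by simp
      then have "v \<in> {y\<in>verts G. \<pi> y \<in> reach (edges G' - {{\<pi> p, \<pi> q}}) (\<pi> p)}" using vV by simp
      then have vR: "v \<in> reach (edges G - {{p, q}}) p" unfolding lift_eq[OF ct pq(3,4)] .
      have "W n a G (reach (edges G - {{p, q}}) p) \<le> 1" using Weq x'(2) by simp
      then show "v \<in> weight_assignment n a G"
        unfolding weight_assignment_def W_def using vV tail vR by blast
    qed
  next
    assume all: "\<forall>v\<in>verts G. \<pi> v = v' \<longrightarrow> v \<in> weight_assignment n a G"
    let ?F = "{v\<in>verts G. \<pi> v = v'}"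
    let ?P = "\<lambda>S. W n a G S \<le> 1"
    have FV: "?F \<subseteq> verts G" by blast
    have "v' \<in> \<pi> ` verts G" using contractsD(3)[OF ct] v'V by simp
    then obtain v0 where v0: "v0 \<in> verts G" "v' = \<pi> v0" by (rule imageE)
    then have "v0 \<in> ?F" by simp
    then have Fne: "?F \<noteq> {}" by (metis empty_iff)
    have H: "\<forall>v\<in>?F. \<exists>x. {v, x} \<in> edges G \<and> ?P (reach (edges G - {{v, x}}) v)"
    proof
      fix v assume "v \<in> ?F"
      then have "v \<in> weight_assignment n a G" using all by simp
      then show "\<exists>x. {v, x} \<in> edges G \<and> ?P (reach (edges G - {{v, x}}) v)"
        by (rule Z_char[OF wd st, THEN iffD1])
    qed
    have NB: "\<forall>u w. {u, w} \<in> edges G \<longrightarrow> \<not> (?P (reach (edges G - {{u, w}}) u) \<and> ?P (reach (edges G - {{u, w}}) w))"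
    proof (intro allI impI notI)
      fix u w assume "{u, w} \<in> edges G" "?P (reach (edges G - {{u, w}}) u) \<and> ?P (reach (edges G - {{u, w}}) w)"
      then show False using W_part[OF wd st \<open>{u, w} \<in> edges G\<close>] by simp
    qed
    from tree.key[OF tr FV Fne H NB] obtain v x where vx: "v \<in> ?F" "x \<notin> ?F" "{v, x} \<in> edges G" "?P (reach (edges G - {{v, x}}) v)"
      by blast
    have xV: "x \<in> verts G" using tree.edge_in[OF tr vx(3)] by simp
    have ne: "\<pi> v \<noteq> \<pi> x" using vx(1,2) xV by simp
    have "{\<pi> v, \<pi> x} \<in> {{\<pi> u, \<pi> w} | u w. {u, w} \<in> edges G \<and> \<pi> u \<noteq> \<pi> w}" using vx(3) ne by blast
    then have e'E: "{\<pi> v, \<pi> x} \<in> edges G'" using contractsD(6)[OF ct] by simp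
    have "W n a G' (reach (edges G' - {{\<pi> v, \<pi> x}}) (\<pi> v)) = W n a G (reach (edges G - {{v, x}}) v)"
      unfolding W_def using lift_labels[OF ct vx(3) ne] by simp
    then have "\<exists>x'. {\<pi> v, x'} \<in> edges G' \<and> W n a G' (reach (edges G' - {{\<pi> v, x'}}) (\<pi> v)) \<le> 1"
      using e'E vx(4) by auto
    then have "\<pi> v \<in> weight_assignment n a G'"
      using Z_char[OF wd st'] by blast
    then show "v' \<in> weight_assignment n a G'" using vx(1) by simp
  qed
qed




lemma smooth_one:
  assumes wd: "weight_data n a" and st: "stable_tree n G" and vZ: "v \<in> weight_assignment n a G"
  shows "\<exists>G' \<pi>. card (verts G') = 2 \<and> contracts n G G' \<pi> \<and> \<pi> v \<in> weight_assignment n a G'"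
proof -
  have tr: "tree (verts G) (edges G)" using st_tree[OF st] .
  obtain x where x: "{v, x} \<in> edges G" "W n a G (reach (edges G - {{v, x}}) v) \<le> 1"
    using Z_char[OF wd st] vZ by blast
  let ?e = "{v, x}"
  define S where "S = reach (edges G - {?e}) v"
  define Sx where "Sx = reach (edges G - {?e}) x"
  have vx: "v \<in> verts G" "x \<in> verts G" "v \<noteq> x" using tree.edge_in[OF tr x(1)] by auto
  have disj: "S \<inter> Sx = {}" unfolding S_def Sx_def using tree.part_disj[OF tr x(1) refl] .
  have un: "verts G \<subseteq> S \<union> Sx" unfolding S_def Sx_def using tree.part_union[OF tr x(1) refl] .
  have SV: "S \<subseteq> verts G" "Sx \<subseteq> verts G" unfolding S_def Sx_def using tree.side_subV[OF tr] vx by auto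
  have vS: "v \<in> S" "x \<in> Sx" "x \<notin> S" unfolding S_def Sx_def using reach_self disj
    by (auto simp: S_def Sx_def)
  define \<pi> where "\<pi> = (\<lambda>y. if y \<in> S then (0::nat) else 1)"
  define G' where "G' = \<lparr>verts = {0, 1}, edges = {{0, 1}}, leaf = (\<lambda>i. \<pi> (leaf G i))\<rparr>"
  have lv: "\<forall>i\<in>{1..n}. leaf G i \<in> verts G" using st unfolding stable_tree_def by blast
  have deg: "\<forall>w\<in>verts G. card {g\<in>edges G. w \<in> g} + card {i\<in>{1..n}. leaf G i = w} \<ge> 3"
    using st unfolding stable_tree_def by blast
  have L0: "card {i\<in>{1..n}. leaf G i \<in> S} \<ge> 2"
    unfolding S_def using tree.label_count[OF tr x(1) refl _ deg] by simp
  have xvE: "{x, v} \<in> edges G" using x(1) by (simp add: insert_commute)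
  have L1: "card {i\<in>{1..n}. leaf G i \<in> Sx} \<ge> 2"
    unfolding Sx_def using tree.label_count[OF tr xvE refl _ deg] by (simp add: insert_commute)
  have f0: "{i\<in>{1..n}. \<pi> (leaf G i) = 0} = {i\<in>{1..n}. leaf G i \<in> S}"
    unfolding \<pi>_def by auto
  have f1: "{i\<in>{1..n}. \<pi> (leaf G i) = 1} = {i\<in>{1..n}. leaf G i \<in> Sx}"
  proof (rule Collect_cong)
    fix i
    show "(i \<in> {1..n} \<and> \<pi> (leaf G i) = 1) = (i \<in> {1..n} \<and> leaf G i \<in> Sx)"
      unfolding \<pi>_def using lv un disj by auto
  qed
  have conn01: "connected_in {{0, 1}} {0::nat, 1}"
    unfolding connected_in_def
  proof (intro conjI ballI)
    show "{0::nat, 1} \<noteq> {}" by simp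
    fix p q :: nat assume "p \<in> {0, 1}" "q \<in> {0, 1}"
    have a01: "(0, 1) \<in> adj_in {{0, 1}} {0::nat, 1}" "(1, 0) \<in> adj_in {{0, 1}} {0::nat, 1}"
      unfolding adj_in_def by (auto simp: insert_commute)
    have r: "(0, 1) \<in> (adj_in {{0, 1}} {0::nat, 1})\<^sup>*" "(1, 0) \<in> (adj_in {{0, 1}} {0::nat, 1})\<^sup>*"
      using r_into_rtrancl[OF a01(1)] r_into_rtrancl[OF a01(2)] by auto
    have "p = 0 \<or> p = 1" "q = 0 \<or> q = 1" using \<open>p \<in> {0, 1}\<close> \<open>q \<in> {0, 1}\<close> by auto
    then show "(p, q) \<in> (adj_in {{0, 1}} {0, 1})\<^sup>*"
      using r by (elim disjE) simp_all
  qed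
  have st': "stable_tree n G'"
    unfolding stable_tree_def G'_def
  proof (simp only: stree.simps, intro conjI)
    show "finite {0::nat, 1}" by simp
    show "{{0::nat, 1}} \<subseteq> {{u, v} |u v. u \<in> {0, 1} \<and> v \<in> {0, 1} \<and> u \<noteq> v}" by blast
    show "\<forall>i\<in>{1..n}. \<pi> (leaf G i) \<in> {0, 1}" unfolding \<pi>_def by simp
    show "connected_in {{0, 1}} {0::nat, 1}" by (rule conn01)
    show "card {{0::nat, 1}} + 1 = card {0::nat, 1}" by simp
    show "\<forall>w\<in>{0::nat, 1}. 3 \<le> card {e \<in> {{0, 1}}. w \<in> e} + card {i \<in> {1..n}. \<pi> (leaf G i) = w}"
    proof
      fix w :: nat assume "w \<in> {0, 1}"
      then have w01: "w = 0 \<or> w = 1" by simp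
      have "{e \<in> {{0::nat, 1}}. w \<in> e} = {{0, 1}}" using \<open>w \<in> {0, 1}\<close> by blast
      then have c1: "card {e \<in> {{0::nat, 1}}. w \<in> e} = 1" by simp
      have "card {i \<in> {1..n}. \<pi> (leaf G i) = w} \<ge> 2"
        using w01
      proof
        assume "w = 0"
        then show ?thesis using f0 L0 by simp
      next
        assume "w = 1"
        then show ?thesis using f1 L1 by simp
      qed
      then show "3 \<le> card {e \<in> {{0, 1}}. w \<in> e} + card {i \<in> {1..n}. \<pi> (leaf G i) = w}"
        using c1 by linarith
    qed
  qed
  have img: "\<pi> ` verts G = {0, 1}"
  proof
    show "\<pi> ` verts G \<subseteq> {0, 1}" unfolding \<pi>_def by auto
    have "\<pi> v = 0" "\<pi> x = 1" unfolding \<pi>_def using vS by auto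
    then have "0 \<in> \<pi> ` verts G" "1 \<in> \<pi> ` verts G" using vx by (metis image_eqI)+
    then show "{0, 1} \<subseteq> \<pi> ` verts G" by simp
  qed
  have fib0: "{y\<in>verts G. \<pi> y = 0} = S" unfolding \<pi>_def using SV by auto
  have fib1: "{y\<in>verts G. \<pi> y = 1} = Sx" unfolding \<pi>_def using SV un disj by auto
  have cS: "connected_in (edges G) S" "connected_in (edges G) Sx"
    unfolding S_def Sx_def using tree.side_conn[OF tr] vx by auto
  have edges': "{{0::nat, 1}} = {{\<pi> u, \<pi> w} | u w. {u, w} \<in> edges G \<and> \<pi> u \<noteq> \<pi> w}"
  proof
    have "\<pi> v = 0" "\<pi> x = 1" unfolding \<pi>_def using vS by auto
    then have "{\<pi> v, \<pi> x} = {0::nat, 1}" by simp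
    moreover have "{\<pi> v, \<pi> x} \<in> {{\<pi> u, \<pi> w} | u w. {u, w} \<in> edges G \<and> \<pi> u \<noteq> \<pi> w}"
      using x(1) \<open>\<pi> v = 0\<close> \<open>\<pi> x = 1\<close> by fastforce
    ultimately show "{{0::nat, 1}} \<subseteq> {{\<pi> u, \<pi> w} | u w. {u, w} \<in> edges G \<and> \<pi> u \<noteq> \<pi> w}"
      by simp
  next
    show "{{\<pi> u, \<pi> w} | u w. {u, w} \<in> edges G \<and> \<pi> u \<noteq> \<pi> w} \<subseteq> {{0::nat, 1}}"
    proof
      fix g assume "g \<in> {{\<pi> u, \<pi> w} | u w. {u, w} \<in> edges G \<and> \<pi> u \<noteq> \<pi> w}"
      then obtain u w where "g = {\<pi> u, \<pi> w}" "\<pi> u \<noteq> \<pi> w" by blast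
      moreover have "\<pi> u \<in> {0, 1}" "\<pi> w \<in> {0, 1}" unfolding \<pi>_def by auto
      ultimately have "g = {0, 1}" by (auto simp: insert_commute)
      then show "g \<in> {{0::nat, 1}}" by simp
    qed
  qed
  have ct: "contracts n G G' \<pi>"
    unfolding contracts_def
  proof (intro conjI)
    show "stable_tree n G" by (rule st)
    show "stable_tree n G'" by (rule st')
    show "\<pi> ` verts G = verts G'" using img unfolding G'_def by simp
    show "\<forall>v'\<in>verts G'. connected_in (edges G) {v \<in> verts G. \<pi> v = v'}"
      unfolding G'_def using fib0 fib1 cS by auto
    show "\<forall>i\<in>{1..n}. leaf G' i = \<pi> (leaf G i)" unfolding G'_def by simp
    show "edges G' = {{\<pi> u, \<pi> v} |u v. {u, v} \<in> edges G \<and> \<pi> u \<noteq> \<pi> v}"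
      unfolding G'_def using edges' by simp
  qed
  have tail0: "is_tail G' {0}"
    unfolding is_tail_def G'_def
  proof (simp only: stree.simps, intro conjI)
    show "{0::nat} \<subseteq> {0, 1}" by simp
    show "connected_in {{0, 1}} {0::nat}" unfolding connected_in_def by simp
    have "{e \<in> {{0::nat, 1}}. e \<inter> {0} \<noteq> {} \<and> e \<inter> ({0, 1} - {0}) \<noteq> {}} = {{0, 1}}" by auto
    then show "card {e \<in> {{0::nat, 1}}. e \<inter> {0} \<noteq> {} \<and> e \<inter> ({0, 1} - {0}) \<noteq> {}} = 1" by simp
  qed
  have tl0: "tail_labels n G' {0} = tail_labels n G S"
    unfolding tail_labels_def G'_def using f0 by simp
  have "\<pi> v = 0" unfolding \<pi>_def using vS by simp
  moreover have "(0::nat) \<in> weight_assignment n a G'"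
    unfolding weight_assignment_def
  proof (intro CollectI conjI exI)
    show "0 \<in> verts G'" unfolding G'_def by simp
    show "is_tail G' {0}" by (rule tail0)
    show "(0::nat) \<in> {0}" by simp
    show "(\<Sum>i\<in>tail_labels n G' {0}. a i) \<le> 1" using tl0 x(2) unfolding W_def S_def by simp
  qed
  moreover have "card (verts G') = 2" unfolding G'_def by simp
  ultimately show ?thesis using ct by (intro exI[of _ G'] exI[of _ \<pi>]) simp
qed

theorem lemma7p3:
  fixes n :: nat and a :: "nat \<Rightarrow> rat"
  assumes "weight_data n a"
  shows "extremal_assignment n (weight_assignment n a) \<and> smooth_assignment n (weight_assignment n a)"
  unfolding extremal_assignment_def smooth_assignment_def
  using part_a[OF assms] part_b[OF assms] smooth_one[OF assms] by blast


end
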